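(* Let $m\in\mathbb{N}$, $0<\sigma_1<\sigma_2<\dots<\sigma_m$, and $b_1,\dots,b_m>0$ with $\sum_{i=1}^m b_i<1$. Let $M$ be the symmetric $m\times m$ matrix with $M_{ii}=(1-b_i)/\sigma_i$ and $M_{ij}=-\sqrt{b_ib_j/(\sigma_i\sigma_j)}$ for $i\neq j$, and let $\mu_1<\dots<\mu_m$ be the roots of $$1+\sum_{j=1}^m\frac{\sigma_jb_j}{(1-\sum_{i=1}^mb_i)(\sigma_j-\lambda)}=0.$$ Then the eigenvalues of $M$ are exactly $1/\mu_1>1/\mu_2>\dots>1/\mu_m$ (all simple); equivalently, the squared semi-axes $h_1^2\le\dots\le h_m^2$ of the ellipsoid $\{p\in\mathbb{R}^m: p^{T}Mp=1\}$ satisfy $h_k^2=\mu_k$ for $k=1,\dots,m$.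
   Context: Under the stated hypotheses the displayed equation in $\lambda$ has exactly $m$ roots, all real, satisfying $\sigma_j<\mu_j<\sigma_{j+1}$ ($j<m$) and $\sigma_m<\mu_m$. *)

theory Defs
  imports Jordan_Normal_Form.Char_Poly
begin

text \<open>Indices are shifted to 0..m-1. The symmetric m x m matrix M of the paper.\<close>
definition Mmat :: "nat \<Rightarrow> (nat \<Rightarrow> real) \<Rightarrow> (nat \<Rightarrow> real) \<Rightarrow> real mat" where
  "Mmat m \<sigma> b = mat m m (\<lambda>(i,j). if i = j then (1 - b i) / \<sigma> i
                                   else - sqrt (b i * b j / (\<sigma> i * \<sigma> j)))"

definition secular_root :: "nat \<Rightarrow> (nat \<Rightarrow> real) \<Rightarrow> (nat \<Rightarrow> real) \<Rightarrow> real \<Rightarrow> bool" where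
  "secular_root m \<sigma> b x \<longleftrightarrow> (\<forall>j<m. x \<noteq> \<sigma> j) \<and>
     1 + (\<Sum>j<m. \<sigma> j * b j / ((1 - (\<Sum>i<m. b i)) * (\<sigma> j - x))) = 0"

end

theory Submission
  imports Defs
begin

lemma secular_pos:
  fixes m :: nat and \<sigma> b :: "nat \<Rightarrow> real"
  assumes s: "\<And>j. j < m \<Longrightarrow> 0 < \<sigma> j" and bp: "\<And>i. i < m \<Longrightarrow> 0 < b i"
    and B: "(\<Sum>i<m. b i) < 1" and r: "secular_root m \<sigma> b x"
  shows "0 < x"
proof (rule ccontr)
  assume "\<not> 0 < x"
  hence "\<And>j. j < m \<Longrightarrow> 0 \<le> \<sigma> j * b j / ((1 - (\<Sum>i<m. b i)) * (\<sigma> j - x))"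
  proof -
    fix j assume j: "j < m" "\<not> 0 < x"
    have "0 < \<sigma> j - x" using s[OF j(1)] j(2) by linarith
    thus "?thesis j" using s[OF j(1)] bp[OF j(1)] B by (intro divide_nonneg_pos mult_pos_pos) auto
  qed
  hence "0 \<le> (\<Sum>j<m. \<sigma> j * b j / ((1 - (\<Sum>i<m. b i)) * (\<sigma> j - x)))"
    by (intro sum_nonneg) auto
  with r show False unfolding secular_root_def by linarith
qed

lemma secular_T:
  fixes m :: nat and \<sigma> b :: "nat \<Rightarrow> real"
  assumes B: "(\<Sum>i<m. b i) < 1" and r: "secular_root m \<sigma> b x"
  shows "x * (\<Sum>j<m. b j / (\<sigma> j - x)) = -1"
proof -
  let ?c = "1 - (\<Sum>i<m. b i)"
  have c: "?c > 0" using B by simp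
  have ne: "\<And>j. j < m \<Longrightarrow> \<sigma> j - x \<noteq> 0" using r unfolding secular_root_def by auto
  have "(\<Sum>j<m. \<sigma> j * b j / (?c * (\<sigma> j - x))) = -1"
    using r unfolding secular_root_def by linarith
  moreover have "(\<Sum>j<m. \<sigma> j * b j / (?c * (\<sigma> j - x))) = (\<Sum>j<m. \<sigma> j * b j / (\<sigma> j - x)) / ?c"
    by (simp add: sum_divide_distrib mult.commute)
  ultimately have e: "(\<Sum>j<m. \<sigma> j * b j / (\<sigma> j - x)) = - ?c" using c by (simp add: field_simps)
  have "(\<Sum>j<m. \<sigma> j * b j / (\<sigma> j - x)) = (\<Sum>j<m. b j + x * (b j / (\<sigma> j - x)))"
    by (rule sum.cong) (use ne in \<open>auto simp: field_simps\<close>)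
  also have "\<dots> = (\<Sum>j<m. b j) + x * (\<Sum>j<m. b j / (\<sigma> j - x))"
    by (simp add: sum.distrib sum_distrib_left)
  finally show ?thesis using e by linarith
qed

lemma distinct_roots_poly:
  fixes p :: "real poly" and r :: "nat \<Rightarrow> real"
  assumes deg: "degree p = m" and lc: "coeff p m = 1" and inj: "inj_on r {..<m}"
    and roots: "\<And>k. k < m \<Longrightarrow> poly p (r k) = 0"
  shows "p = (\<Prod>k<m. [:- r k, 1:])"
proof (rule poly_eqI_degree_lead_coeff[where n = m and A = "r ` {..<m}"])
  let ?q = "(\<Prod>k<m. [:- r k, 1:])"
  have dq: "degree ?q = m"
    by (subst degree_prod_sum_eq) auto
  have "lead_coeff ?q = 1" by (simp add: lead_coeff_prod)
  thus "coeff p m = coeff ?q m" using dq lc by simp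
  show "card (r ` {..<m}) \<ge> m" using card_image[OF inj] by simp
  show "degree p \<le> m" "degree ?q \<le> m" using deg dq by auto
  fix z assume "z \<in> r ` {..<m}"
  then obtain k where k: "k < m" "z = r k" by auto
  have "poly ?q z = 0" using k by (auto simp: poly_prod prod_zero_iff)
  thus "poly p z = poly ?q z" using roots k by simp
qed

lemma order_prod_linear:
  fixes r :: "nat \<Rightarrow> real"
  assumes inj: "inj_on r {..<m}" and k: "k < m"
  shows "order (r k) (\<Prod>j<m. [:- r j, 1:]) = 1"
proof -
  have split: "(\<Prod>j<m. [:- r j, 1:]) = [:- r k, 1:] * (\<Prod>j\<in>{..<m}-{k}. [:- r j, 1:])"
    using k by (subst prod.remove[of _ k]) auto
  have pnz: "poly (\<Prod>j\<in>{..<m}-{k}. [:- r j, 1:]) (r k) \<noteq> 0"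
    using inj k by (auto simp: poly_prod prod_zero_iff inj_on_def)
  hence nz: "(\<Prod>j\<in>{..<m}-{k}. [:- r j, 1:]) \<noteq> 0" by auto
  from pnz have o0: "order (r k) (\<Prod>j\<in>{..<m}-{k}. [:- r j, 1:]) = 0" by (rule order_0I)
  have o1: "order (r k) [:- r k, 1:] = 1" using order_power_n_n[of "r k" 1] by simp
  have lz: "[:- r k, 1:] \<noteq> (0::real poly)" by simp
  have pz: "[:- r k, 1:] * (\<Prod>j\<in>{..<m}-{k}. [:- r j, 1:]) \<noteq> 0"
    using nz lz by (metis mult_eq_0_iff)
  show ?thesis unfolding split order_mult[OF pz] using o0 o1 by simp
qed

theorem lemma2p9:
  fixes m :: nat and \<sigma> b \<mu> :: "nat \<Rightarrow> real"
  assumes "0 < m \<Longrightarrow> 0 < \<sigma> 0"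
    and "\<And>i j. i < j \<Longrightarrow> j < m \<Longrightarrow> \<sigma> i < \<sigma> j"
    and "\<And>i. i < m \<Longrightarrow> 0 < b i"
    and "(\<Sum>i<m. b i) < 1"
    and "\<And>i j. i < j \<Longrightarrow> j < m \<Longrightarrow> \<mu> i < \<mu> j"
    and "{x. secular_root m \<sigma> b x} = \<mu> ` {..<m}"
  shows "{k. eigenvalue (Mmat m \<sigma> b) k} = (\<lambda>k. 1 / \<mu> k) ` {..<m}
         \<and> (\<forall>i j. i < j \<and> j < m \<longrightarrow> 1 / \<mu> i > 1 / \<mu> j)
         \<and> (\<forall>k<m. order (1 / \<mu> k) (char_poly (Mmat m \<sigma> b)) = 1)"
proof -
  note A = assms
  have spos: "\<And>j. j < m \<Longrightarrow> 0 < \<sigma> j"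
  proof -
    fix j assume j: "j < m"
    show "0 < \<sigma> j"
    proof (cases "j = 0")
      case True thus ?thesis using A(1) j by auto
    next
      case False thus ?thesis using A(1)[of] A(2)[of 0 j] j by auto
    qed
  qed
  have root: "\<And>k. k < m \<Longrightarrow> secular_root m \<sigma> b (\<mu> k)" using A(6) by blast
  have mupos: "\<And>k. k < m \<Longrightarrow> 0 < \<mu> k"
    using secular_pos[OF spos A(3) A(4) root] by auto
  define M where "M = Mmat m \<sigma> b"
  have Mc: "M \<in> carrier_mat m m" unfolding M_def Mmat_def by auto
  define a where "a = (\<lambda>i. sqrt (b i / \<sigma> i))"
  have a2: "\<And>i. i < m \<Longrightarrow> \<sigma> i * (a i * a i) = b i"
  proof -
    fix i assume i: "i < m"
    have "a i * a i = b i / \<sigma> i" unfolding a_def using spos[OF i] A(3)[OF i]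
      by (simp add: less_imp_le)
    thus "\<sigma> i * (a i * a i) = b i" using spos[OF i] by simp
  qed
  have apos: "\<And>i. i < m \<Longrightarrow> 0 < a i"
  proof -
    fix i assume i: "i < m"
    show "0 < a i" unfolding a_def using spos[OF i] A(3)[OF i] by simp
  qed
  have Mij: "\<And>i j. i < m \<Longrightarrow> j < m \<Longrightarrow> M $$ (i,j) = (if i = j then 1 / \<sigma> i else 0) - a i * a j"
  proof -
    fix i j assume ij: "i < m" "j < m"
    have "sqrt (b i * b j / (\<sigma> i * \<sigma> j)) = a i * a j"
      unfolding a_def by (simp add: real_sqrt_mult[symmetric])
    moreover have "(1 - b i) / \<sigma> i = 1 / \<sigma> i - a i * a i"
      using a2[OF ij(1)] spos[OF ij(1)] by (simp add: field_simps)
    ultimately show "?thesis i j" using ij unfolding M_def Mmat_def by auto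
  qed
  have ev: "\<And>k. k < m \<Longrightarrow> eigenvalue M (1 / \<mu> k)"
  proof -
    fix k assume k: "k < m"
    let ?x = "\<mu> k"
    have ne: "\<And>j. j < m \<Longrightarrow> \<sigma> j - ?x \<noteq> 0" using root[OF k] unfolding secular_root_def by auto
    define T where "T = (\<Sum>j<m. b j / (\<sigma> j - ?x))"
    have T: "?x * T = -1" unfolding T_def by (rule secular_T[OF A(4) root[OF k]])
    define u where "u = vec m (\<lambda>j. \<sigma> j * a j / (\<sigma> j - ?x))"
    have uc: "u \<in> carrier_vec m" unfolding u_def by simp
    have unz: "u \<noteq> 0\<^sub>v m"
    proof
      assume "u = 0\<^sub>v m"
      hence "u $ k = 0" using k by simp
      thus False using k spos[OF k] apos[OF k] ne[OF k] unfolding u_def by simp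
    qed
    have "M *\<^sub>v u = (1 / ?x) \<cdot>\<^sub>v u"
    proof (rule eq_vecI)
      show "dim_vec (M *\<^sub>v u) = dim_vec ((1 / ?x) \<cdot>\<^sub>v u)" using Mc uc by simp
      fix i assume "i < dim_vec ((1 / ?x) \<cdot>\<^sub>v u)"
      hence i: "i < m" unfolding u_def by simp
      have "(M *\<^sub>v u) $ i = (\<Sum>j<m. M $$ (i,j) * u $ j)"
        using Mc i unfolding u_def by (simp add: scalar_prod_def row_def lessThan_atLeast0)
      also have "\<dots> = (\<Sum>j<m. (if i = j then 1 / \<sigma> i * u $ j else 0) - a i * (b j / (\<sigma> j - ?x)))"
      proof (rule sum.cong)
        fix j assume "j \<in> {..<m}"
        hence j: "j < m" by simp
        have "a j * (\<sigma> j * a j / (\<sigma> j - ?x)) = b j / (\<sigma> j - ?x)"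
          using a2[OF j] by (simp add: field_simps)
        moreover have "u $ j = \<sigma> j * a j / (\<sigma> j - ?x)" using j unfolding u_def by simp
        ultimately show "M $$ (i,j) * u $ j = (if i = j then 1 / \<sigma> i * u $ j else 0) - a i * (b j / (\<sigma> j - ?x))"
          unfolding Mij[OF i j] using a2[OF j] spos[OF j] ne[OF j]
          by (cases "i = j") (simp_all add: field_simps)
      qed simp
      also have "\<dots> = 1 / \<sigma> i * u $ i - a i * T"
        using i by (simp add: sum_subtractf sum_distrib_left T_def)
      also have "\<dots> = a i / (\<sigma> i - ?x) - a i * T"
        using i spos[OF i] unfolding u_def by simp
      also have "\<dots> = (1 / ?x) * u $ i"
      proof -
        have Tv: "T = - 1 / ?x" using T mupos[OF k] by (simp add: field_simps)
        have "u $ i = \<sigma> i * a i / (\<sigma> i - ?x)" using i unfolding u_def by simp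
        thus ?thesis unfolding Tv using ne[OF i] mupos[OF k]
          by (simp add: field_simps)
      qed
      finally show "(M *\<^sub>v u) $ i = ((1 / ?x) \<cdot>\<^sub>v u) $ i" using i unfolding u_def by simp
    qed
    thus "eigenvalue M (1 / ?x)"
      unfolding eigenvalue_def eigenvector_def using Mc uc unz by auto
  qed
  define r where "r = (\<lambda>k. 1 / \<mu> k)"
  have inj: "inj_on r {..<m}"
  proof (rule inj_onI)
    fix i j assume "i \<in> {..<m}" "j \<in> {..<m}" "r i = r j"
    hence "\<mu> i = \<mu> j" "i < m" "j < m" unfolding r_def by auto
    thus "i = j" using A(5)[of i j] A(5)[of j i] by (cases i j rule: linorder_cases) auto
  qed
  have cp: "char_poly M = (\<Prod>k<m. [:- r k, 1:])"
    using degree_monic_char_poly[OF Mc] inj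
    by (intro distinct_roots_poly) (auto simp: r_def eigenvalue_root_char_poly[OF Mc, symmetric] ev)
  have S1: "{k. eigenvalue M k} = r ` {..<m}"
  proof -
    have "\<And>x. eigenvalue M x \<longleftrightarrow> (\<exists>k<m. x = r k)"
      unfolding eigenvalue_root_char_poly[OF Mc] cp by (auto simp: poly_prod prod_zero_iff)
    thus ?thesis by auto
  qed
  have S2: "\<forall>i j. i < j \<and> j < m \<longrightarrow> 1 / \<mu> i > 1 / \<mu> j"
    using A(5) mupos by (auto intro!: divide_strict_left_mono)
  have S3: "\<forall>k<m. order (1 / \<mu> k) (char_poly M) = 1"
    using order_prod_linear[OF inj] unfolding cp r_def by auto
  show ?thesis using S1 S2 S3 unfolding M_def r_def by auto
qed

end
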